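(* (i) Every sequence of applications of the rules Monadic, Horn, Shallow and Linear, applied with the rule preference of $\Rightarrow_{\mathrm{apr}}$ (Monadic before Horn before Shallow before Linear), starting from a finite clause set, terminates. (ii) The Monadic transformation is an over-approximation. (iii) The Horn transformation is an over-approximation. (iv) The Shallow transformation is an over-approximation. (v) The Linear transformation is an over-approximation.
   Context: First-order logic without equality. A clause is a finite multiset of literals written $\Gamma \rightarrow \Delta$, where $\Gamma$ is the multiset of atoms of its negative literals and $\Delta$ the multiset of atoms of its positive literals; a clause with at most one positive literal is Horn. A Herbrand interpretation $I$ is a set of ground atoms; $I \models \Gamma\rightarrow\Delta$ iff for every grounding substitution $\sigma$, $\Delta\sigma\cap I\neq\emptyset$ or $\Gamma\sigma\not\subseteq I$; $I$ is a model of a clause set $N$ if it satisfies every clause of $N$; $N$ is satisfiable if it has a model. $t[s]_p$ denotes that term (or atom) $t$ has subterm $s$ at position $p$. A predicate is monadic if it has at most one argument. A relation $\Rightarrow$ on clause sets is an over-approximation if whenever $N\Rightarrow N'$ and $N'$ is satisfiable, then $N$ is satisfiable. Fix a single fresh monadic predicate $T$ and, for each non-monadic predicate $P$, a fresh function symbol $f_P$. The rules are: Monadic: $N\cup\{C[P(t_1,\dots,t_n)]\}\Rightarrow N\cup\{C[T(f_P(t_1,\dots,t_n))]\}$, replacing an occurrence of an atom $P(t_1,\dots,t_n)$ with $n>1$ in a clause. Horn: $N\cup\{\Gamma\rightarrow E_1,\dots,E_n\}\Rightarrow N\cup\{\Gamma\rightarrow E_i\}$ for some $i$, provided $n>1$.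 Shallow: $N\cup\{\Gamma\rightarrow E[s]_p\}\Rightarrow N\cup\{S(x),\Gamma_1\rightarrow E[x]_p\}\cup\{\Gamma_2\rightarrow S(s)\}$, provided $s$ is a complex (non-variable) term, $p$ is not a top position of an argument of $E$ (i.e. $s$ is a proper subterm of an argument of $E$), $x$ is a fresh variable, $S$ a fresh monadic predicate, and $\Gamma_1\cup\Gamma_2=\Gamma$. Linear: $N\cup\{\Gamma\rightarrow E[x]_{p,q}\}\Rightarrow N\cup\{\Gamma\{x\mapsto x'\},\Gamma\rightarrow E[x']_q\}$, provided $x'$ is a fresh variable and $p,q$ are two different occurrences of $x$ in $E$. $\Rightarrow_{\mathrm{apr}}$ is the union of these four relations, applied with preference Monadic before Horn before Shallow before Linear.
   Formalization: The Monadic rule replaces every atom $P(t_1,\dots,t_n)$ with $n>1$ in every clause of N by $T(f_P(t_1,\dots,t_n))$ at once, rather than a single occurrence in one clause. The paper assumes this as well. *)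

theory Defs
  imports "HOL-Library.Multiset"
begin

datatype ('f, 'v) trm = Var 'v | Fn 'f "('f, 'v) trm list"

datatype ('p, 'f, 'v) atm = Atm 'p "('f, 'v) trm list"

fun atm_pred :: "('p, 'f, 'v) atm \<Rightarrow> 'p" where
  "atm_pred (Atm P ts) = P"

fun atm_args :: "('p, 'f, 'v) atm \<Rightarrow> ('f, 'v) trm list" where
  "atm_args (Atm P ts) = ts"

text \<open>A clause Gamma -> Delta: pair of multisets (negative atoms, positive atoms).\<close>
type_synonym ('p, 'f, 'v) cls = "('p, 'f, 'v) atm multiset \<times> ('p, 'f, 'v) atm multiset"

fun vars_trm :: "('f, 'v) trm \<Rightarrow> 'v set" where
  "vars_trm (Var x) = {x}"
| "vars_trm (Fn f ts) = (\<Union>t\<in>set ts. vars_trm t)"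

fun funs_trm :: "('f, 'v) trm \<Rightarrow> 'f set" where
  "funs_trm (Var x) = {}"
| "funs_trm (Fn f ts) = insert f (\<Union>t\<in>set ts. funs_trm t)"

definition vars_atm :: "('p, 'f, 'v) atm \<Rightarrow> 'v set" where
  "vars_atm A = (\<Union>t\<in>set (atm_args A). vars_trm t)"

definition funs_atm :: "('p, 'f, 'v) atm \<Rightarrow> 'f set" where
  "funs_atm A = (\<Union>t\<in>set (atm_args A). funs_trm t)"

definition atoms_cls :: "('p, 'f, 'v) cls \<Rightarrow> ('p, 'f, 'v) atm set" where
  "atoms_cls C = set_mset (fst C) \<union> set_mset (snd C)"

definition vars_cls :: "('p, 'f, 'v) cls \<Rightarrow> 'v set" where
  "vars_cls C = (\<Union>A\<in>atoms_cls C. vars_atm A)"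

definition preds_set :: "('p, 'f, 'v) cls set \<Rightarrow> 'p set" where
  "preds_set N = (\<Union>C\<in>N. atm_pred ` atoms_cls C)"

definition funs_set :: "('p, 'f, 'v) cls set \<Rightarrow> 'f set" where
  "funs_set N = (\<Union>C\<in>N. \<Union>A\<in>atoms_cls C. funs_atm A)"

fun subst :: "('v \<Rightarrow> ('f, 'v) trm) \<Rightarrow> ('f, 'v) trm \<Rightarrow> ('f, 'v) trm" where
  "subst \<sigma> (Var x) = \<sigma> x"
| "subst \<sigma> (Fn f ts) = Fn f (map (subst \<sigma>) ts)"

fun subst_atm :: "('v \<Rightarrow> ('f, 'v) trm) \<Rightarrow> ('p, 'f, 'v) atm \<Rightarrow> ('p, 'f, 'v) atm" where
  "subst_atm \<sigma> (Atm P ts) = Atm P (map (subst \<sigma>) ts)"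

definition ground_trm :: "('f, 'v) trm \<Rightarrow> bool" where
  "ground_trm t \<longleftrightarrow> vars_trm t = {}"

definition ground_atm :: "('p, 'f, 'v) atm \<Rightarrow> bool" where
  "ground_atm A \<longleftrightarrow> vars_atm A = {}"

definition grounding :: "('v \<Rightarrow> ('f, 'v) trm) \<Rightarrow> bool" where
  "grounding \<sigma> \<longleftrightarrow> (\<forall>x. ground_trm (\<sigma> x))"

definition true_cls :: "('p, 'f, 'v) atm set \<Rightarrow> ('p, 'f, 'v) cls \<Rightarrow> bool" where
  "true_cls I C \<longleftrightarrow> (\<forall>\<sigma>. grounding \<sigma> \<longrightarrow>
      (subst_atm \<sigma> ` set_mset (snd C)) \<inter> I \<noteq> {} \<or>
      \<not> (subst_atm \<sigma> ` set_mset (fst C) \<subseteq> I))"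

definition herbrand_interp :: "('p, 'f, 'v) atm set \<Rightarrow> bool" where
  "herbrand_interp I \<longleftrightarrow> (\<forall>A\<in>I. ground_atm A)"

definition is_model :: "('p, 'f, 'v) atm set \<Rightarrow> ('p, 'f, 'v) cls set \<Rightarrow> bool" where
  "is_model I N \<longleftrightarrow> herbrand_interp I \<and> (\<forall>C\<in>N. true_cls I C)"

definition satisfiable :: "('p, 'f, 'v) cls set \<Rightarrow> bool" where
  "satisfiable N \<longleftrightarrow> (\<exists>I. is_model I N)"

definition over_approximation :: "(('p, 'f, 'v) cls set \<Rightarrow> ('p, 'f, 'v) cls set \<Rightarrow> bool) \<Rightarrow> bool" where
  "over_approximation R \<longleftrightarrow> (\<forall>N N'. R N N' \<longrightarrow> satisfiable N' \<longrightarrow> satisfiable N)"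

text \<open>Positions in terms are lists of argument indices (0-based).\<close>
primrec valid_pos :: "('f, 'v) trm \<Rightarrow> nat list \<Rightarrow> bool" where
  "valid_pos t [] = True"
| "valid_pos t (i # p) = (case t of Var x \<Rightarrow> False
                           | Fn f ts \<Rightarrow> i < length ts \<and> valid_pos (ts ! i) p)"

primrec subt_at :: "('f, 'v) trm \<Rightarrow> nat list \<Rightarrow> ('f, 'v) trm" where
  "subt_at t [] = t"
| "subt_at t (i # p) = (case t of Var x \<Rightarrow> Var x
                         | Fn f ts \<Rightarrow> subt_at (ts ! i) p)"

primrec repl_at :: "('f, 'v) trm \<Rightarrow> nat list \<Rightarrow> ('f, 'v) trm \<Rightarrow> ('f, 'v) trm" where
  "repl_at t [] s = s"
| "repl_at t (i # p) s = (case t of Var x \<Rightarrow> Var x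
                           | Fn f ts \<Rightarrow> Fn f (ts[i := repl_at (ts ! i) p s]))"

text \<open>Positions in an atom P(t1,...,tn): i # q denotes position q in argument t_(i+1).
  The empty list is the (top) position of the atom itself, which is not a term position.\<close>
fun valid_apos :: "('p, 'f, 'v) atm \<Rightarrow> nat list \<Rightarrow> bool" where
  "valid_apos A [] = False"
| "valid_apos (Atm P ts) (i # q) = (i < length ts \<and> valid_pos (ts ! i) q)"

fun asubt_at :: "('p, 'f, 'v) atm \<Rightarrow> nat list \<Rightarrow> ('f, 'v) trm" where
  "asubt_at (Atm P ts) (i # q) = subt_at (ts ! i) q"
| "asubt_at (Atm P ts) [] = undefined"

fun arepl_at :: "('p, 'f, 'v) atm \<Rightarrow> nat list \<Rightarrow> ('f, 'v) trm \<Rightarrow> ('p, 'f, 'v) atm" where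
  "arepl_at (Atm P ts) (i # q) s = Atm P (ts[i := repl_at (ts ! i) q s])"
| "arepl_at A [] s = A"

fun mu_atm :: "'p \<Rightarrow> ('p \<Rightarrow> 'f) \<Rightarrow> 'p \<Rightarrow> ('p, 'f, 'v) atm \<Rightarrow> ('p, 'f, 'v) atm" where
  "mu_atm T fP P (Atm Q ts) =
     (if Q = P \<and> length ts > 1 then Atm T [Fn (fP P) ts] else Atm Q ts)"

definition mu_cls :: "'p \<Rightarrow> ('p \<Rightarrow> 'f) \<Rightarrow> 'p \<Rightarrow> ('p, 'f, 'v) cls \<Rightarrow> ('p, 'f, 'v) cls" where
  "mu_cls T fP P C = (image_mset (mu_atm T fP P) (fst C), image_mset (mu_atm T fP P) (snd C))"

definition monadic_step ::
  "'p \<Rightarrow> ('p \<Rightarrow> 'f) \<Rightarrow> ('p, 'f, 'v) cls set \<Rightarrow> ('p, 'f, 'v) cls set \<Rightarrow> bool" where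
  "monadic_step T fP N N' \<longleftrightarrow>
     (\<exists>P. (\<exists>C\<in>N. \<exists>ts. Atm P ts \<in> atoms_cls C \<and> length ts > 1) \<and>
          N' = mu_cls T fP P ` N)"

definition horn_step :: "('p, 'f, 'v) cls set \<Rightarrow> ('p, 'f, 'v) cls set \<Rightarrow> bool" where
  "horn_step N N' \<longleftrightarrow>
     (\<exists>\<Gamma> \<Delta> E. (\<Gamma>, \<Delta>) \<in> N \<and> size \<Delta> > 1 \<and> E \<in># \<Delta> \<and>
        N' = (N - {(\<Gamma>, \<Delta>)}) \<union> {(\<Gamma>, {#E#})})"

definition shallow_step :: "('p, 'f, 'v) cls set \<Rightarrow> ('p, 'f, 'v) cls set \<Rightarrow> bool" where
  "shallow_step N N' \<longleftrightarrow>
     (\<exists>\<Gamma> E i q s x S \<Gamma>1 \<Gamma>2.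
        (\<Gamma>, {#E#}) \<in> N \<and>
        valid_apos E (i # q) \<and> q \<noteq> [] \<and> asubt_at E (i # q) = s \<and>
        (\<exists>f ts. s = Fn f ts) \<and>
        x \<notin> vars_cls (\<Gamma>, {#E#}) \<and>
        S \<notin> preds_set N \<and>
        \<Gamma>1 \<union># \<Gamma>2 = \<Gamma> \<and>
        N' = (N - {(\<Gamma>, {#E#})}) \<union>
               {(add_mset (Atm S [Var x]) \<Gamma>1, {#arepl_at E (i # q) (Var x)#}),
                (\<Gamma>2, {#Atm S [s]#})})"

definition linear_step :: "('p, 'f, 'v) cls set \<Rightarrow> ('p, 'f, 'v) cls set \<Rightarrow> bool" where
  "linear_step N N' \<longleftrightarrow>
     (\<exists>\<Gamma> E p q x x'.
        (\<Gamma>, {#E#}) \<in> N \<and>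
        p \<noteq> q \<and> valid_apos E p \<and> valid_apos E q \<and>
        asubt_at E p = Var x \<and> asubt_at E q = Var x \<and>
        x' \<notin> vars_cls (\<Gamma>, {#E#}) \<and>
        N' = (N - {(\<Gamma>, {#E#})}) \<union>
               {(image_mset (subst_atm (Var(x := Var x'))) \<Gamma> + \<Gamma>,
                 {#arepl_at E q (Var x')#})})"

definition apr_step ::
  "'p \<Rightarrow> ('p \<Rightarrow> 'f) \<Rightarrow> ('p, 'f, 'v) cls set \<Rightarrow> ('p, 'f, 'v) cls set \<Rightarrow> bool" where
  "apr_step T fP N N' \<longleftrightarrow>
     monadic_step T fP N N' \<or>
     ((\<nexists>M. monadic_step T fP N M) \<and> horn_step N N') \<or>
     ((\<nexists>M. monadic_step T fP N M) \<and> (\<nexists>M. horn_step N M) \<and> shallow_step N N') \<or>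
     ((\<nexists>M. monadic_step T fP N M) \<and> (\<nexists>M. horn_step N M) \<and> (\<nexists>M. shallow_step N M) \<and>
      linear_step N N')"

end

theory Submission
  imports Defs
begin

section \<open>Substitution lemmas\<close>

lemma subst_agree: "(\<forall>y\<in>vars_trm t. \<sigma> y = \<tau> y) \<Longrightarrow> subst \<sigma> t = subst \<tau> t"
  by (induction t) auto

lemma subst_comp: "subst \<sigma> (subst \<rho> t) = subst (\<lambda>y. subst \<sigma> (\<rho> y)) t"
  by (induction t) auto

lemma vars_subst: "vars_trm (subst \<sigma> t) = (\<Union>y\<in>vars_trm t. vars_trm (\<sigma> y))"
  by (induction t) auto

lemma ground_subst: "grounding \<sigma> \<Longrightarrow> ground_trm (subst \<sigma> t)"
  by (simp add: grounding_def ground_trm_def vars_subst)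

lemma ground_subst_atm: "grounding \<sigma> \<Longrightarrow> ground_atm (subst_atm \<sigma> A)"
  by (cases A) (auto simp: ground_atm_def vars_atm_def vars_subst grounding_def ground_trm_def)

lemma subst_atm_agree: "(\<forall>y\<in>vars_atm A. \<sigma> y = \<tau> y) \<Longrightarrow> subst_atm \<sigma> A = subst_atm \<tau> A"
  by (cases A) (auto simp: vars_atm_def intro!: subst_agree)

lemma subst_atm_comp: "subst_atm \<sigma> (subst_atm \<rho> A) = subst_atm (\<lambda>y. subst \<sigma> (\<rho> y)) A"
  by (cases A) (auto simp: subst_comp)

lemma subst_repl:
  assumes "valid_pos t q" "subst \<sigma>' r = subst \<sigma> (subt_at t q)" "\<forall>y\<in>vars_trm t. \<sigma>' y = \<sigma> y"
  shows "subst \<sigma>' (repl_at t q r) = subst \<sigma> t"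
  using assms
proof (induction q arbitrary: t)
  case Nil thus ?case by simp
next
  case (Cons i q)
  then obtain f ts where t: "t = Fn f ts" and i: "i < length ts" and v: "valid_pos (ts!i) q"
    by (auto split: trm.splits)
  have mem: "ts ! i \<in> set ts" using i by simp
  have ag: "\<forall>y\<in>vars_trm (ts!i). \<sigma>' y = \<sigma> y" using Cons.prems(3) t mem by auto
  have IH: "subst \<sigma>' (repl_at (ts!i) q r) = subst \<sigma> (ts!i)"
    using Cons.IH[OF v _ ag] Cons.prems(2) t by auto
  have m: "map (subst \<sigma>') ts = map (subst \<sigma>) ts" using Cons.prems(3) t
    by (auto intro!: subst_agree)
  have "map (subst \<sigma>') (ts[i := repl_at (ts!i) q r]) = (map (subst \<sigma>) ts)[i := subst \<sigma> (ts!i)]"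
    by (simp add: map_update m IH)
  also have "\<dots> = map (subst \<sigma>) ts" using i by (metis list_update_id nth_map)
  finally show ?case using t by simp
qed

lemma subst_arepl:
  assumes "valid_apos E p" "subst \<sigma>' r = subst \<sigma> (asubt_at E p)" "\<forall>y\<in>vars_atm E. \<sigma>' y = \<sigma> y"
  shows "subst_atm \<sigma>' (arepl_at E p r) = subst_atm \<sigma> E"
proof -
  obtain P ts where E: "E = Atm P ts" by (cases E)
  obtain i q where p: "p = i # q" using assms(1) by (cases p) auto
  have i: "i < length ts" and v: "valid_pos (ts!i) q" using assms(1) E p by auto
  have mem: "ts ! i \<in> set ts" using i by simp
  have ag: "\<forall>y\<in>vars_trm (ts!i). \<sigma>' y = \<sigma> y" using assms(3) E mem by (auto simp: vars_atm_def)
  have IH: "subst \<sigma>' (repl_at (ts!i) q r) = subst \<sigma> (ts!i)"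
    using subst_repl[OF v _ ag] assms(2) E p by auto
  have m: "map (subst \<sigma>') ts = map (subst \<sigma>) ts" using assms(3) E
    by (auto intro!: subst_agree simp: vars_atm_def)
  have "map (subst \<sigma>') (ts[i := repl_at (ts!i) q r]) = (map (subst \<sigma>) ts)[i := subst \<sigma> (ts!i)]"
    by (simp add: map_update m IH)
  also have "\<dots> = map (subst \<sigma>) ts" using i by (metis list_update_id nth_map)
  finally show ?thesis using E p by simp
qed

lemma vars_subt: "valid_pos t p \<Longrightarrow> vars_trm (subt_at t p) \<subseteq> vars_trm t"
proof (induction p arbitrary: t)
  case Nil thus ?case by simp
next
  case (Cons i p)
  then obtain f ts where t: "t = Fn f ts" and i: "i < length ts" and v: "valid_pos (ts!i) p"
    by (auto split: trm.splits)
  have "ts ! i \<in> set ts" using i by simp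
  thus ?case using Cons.IH[OF v] t by auto
qed

lemma vars_asubt: "valid_apos E p \<Longrightarrow> vars_trm (asubt_at E p) \<subseteq> vars_atm E"
proof -
  assume a: "valid_apos E p"
  obtain P ts where E: "E = Atm P ts" by (cases E)
  obtain i q where p: "p = i # q" using a by (cases p) auto
  have i: "i < length ts" and v: "valid_pos (ts!i) q" using a E p by auto
  have "ts ! i \<in> set ts" using i by simp
  thus ?thesis using vars_subt[OF v] E p by (auto simp: vars_atm_def)
qed

section \<open>Over-approximations\<close>

lemma mu_subst: "mu_atm T fP P (subst_atm \<sigma> A) = subst_atm \<sigma> (mu_atm T fP P A)"
  by (cases A) auto

lemma mu_ground: "ground_atm (mu_atm T fP P A) = ground_atm A"
  by (cases A) (auto simp: ground_atm_def vars_atm_def)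

lemma monadic_oa: "over_approximation (monadic_step T fP :: ('p, 'f, 'v) cls set \<Rightarrow> _ \<Rightarrow> bool)"
  unfolding over_approximation_def
proof (intro allI impI)
  fix N N' :: "('p, 'f, 'v) cls set" assume st: "monadic_step T fP N N'" and sat: "satisfiable N'"
  then obtain P where N': "N' = mu_cls T fP P ` N" unfolding monadic_step_def by blast
  from sat obtain I' where I': "is_model I' N'" unfolding satisfiable_def by blast
  define I where "I = {A. ground_atm A \<and> mu_atm T fP P A \<in> I'}"
  have "is_model I N"
    unfolding is_model_def
  proof
    show "herbrand_interp I" by (auto simp: herbrand_interp_def I_def)
  next
    show "\<forall>C\<in>N. true_cls I C"
    proof
      fix C assume C: "C \<in> N"
      hence tc: "true_cls I' (mu_cls T fP P C)" using I' N' by (auto simp: is_model_def)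
      show "true_cls I C" unfolding true_cls_def
      proof (intro allI impI)
        fix \<sigma> :: "'v \<Rightarrow> ('f, 'v) trm" assume g: "grounding \<sigma>"
        from tc g have "(subst_atm \<sigma> ` set_mset (snd (mu_cls T fP P C))) \<inter> I' \<noteq> {} \<or>
          \<not> (subst_atm \<sigma> ` set_mset (fst (mu_cls T fP P C)) \<subseteq> I')"
          unfolding true_cls_def by blast
        thus "(subst_atm \<sigma> ` set_mset (snd C)) \<inter> I \<noteq> {} \<or>
          \<not> (subst_atm \<sigma> ` set_mset (fst C) \<subseteq> I)"
        proof
          assume "(subst_atm \<sigma> ` set_mset (snd (mu_cls T fP P C))) \<inter> I' \<noteq> {}"
          then obtain A where "A \<in># snd C" "mu_atm T fP P (subst_atm \<sigma> A) \<in> I'"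
            by (auto simp: mu_cls_def mu_subst)
          hence "subst_atm \<sigma> A \<in> (subst_atm \<sigma> ` set_mset (snd C)) \<inter> I"
            using ground_subst_atm[OF g] by (auto simp: I_def)
          thus ?thesis by blast
        next
          assume "\<not> (subst_atm \<sigma> ` set_mset (fst (mu_cls T fP P C)) \<subseteq> I')"
          then obtain A where "A \<in># fst C" "mu_atm T fP P (subst_atm \<sigma> A) \<notin> I'"
            by (auto simp: mu_cls_def mu_subst)
          hence "subst_atm \<sigma> A \<notin> I" "subst_atm \<sigma> A \<in> subst_atm \<sigma> ` set_mset (fst C)"
            by (auto simp: I_def)
          thus ?thesis by blast
        qed
      qed
    qed
  qed
  thus "satisfiable N" unfolding satisfiable_def by blast
qed

lemma horn_oa: "over_approximation (horn_step :: ('p, 'f, 'v) cls set \<Rightarrow> _ \<Rightarrow> bool)"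
  unfolding over_approximation_def
proof (intro allI impI)
  fix N N' :: "('p, 'f, 'v) cls set" assume st: "horn_step N N'" and sat: "satisfiable N'"
  then obtain \<Gamma> \<Delta> E where C: "(\<Gamma>, \<Delta>) \<in> N" and E: "E \<in># \<Delta>"
    and N': "N' = (N - {(\<Gamma>, \<Delta>)}) \<union> {(\<Gamma>, {#E#})}" unfolding horn_step_def by blast
  from sat obtain I where I: "is_model I N'" unfolding satisfiable_def by blast
  have "true_cls I (\<Gamma>, \<Delta>)"
  proof -
    have "true_cls I (\<Gamma>, {#E#})" using I N' by (auto simp: is_model_def)
    thus ?thesis using E unfolding true_cls_def by fastforce
  qed
  hence "is_model I N" using I N' by (auto simp: is_model_def)
  thus "satisfiable N" unfolding satisfiable_def by blast
qed

lemma shallow_oa: "over_approximation (shallow_step :: ('p, 'f, 'v) cls set \<Rightarrow> _ \<Rightarrow> bool)"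
  unfolding over_approximation_def
proof (intro allI impI)
  fix N N' :: "('p, 'f, 'v) cls set" assume st: "shallow_step N N'" and sat: "satisfiable N'"
  then obtain \<Gamma> E i q s x S \<Gamma>1 \<Gamma>2 where
    C: "(\<Gamma>, {#E#}) \<in> N" and v: "valid_apos E (i # q)" and s: "asubt_at E (i # q) = s"
    and x: "x \<notin> vars_cls (\<Gamma>, {#E#})" and G: "\<Gamma>1 \<union># \<Gamma>2 = \<Gamma>"
    and N': "N' = (N - {(\<Gamma>, {#E#})}) \<union>
               {(add_mset (Atm S [Var x]) \<Gamma>1, {#arepl_at E (i # q) (Var x)#}),
                (\<Gamma>2, {#Atm S [s]#})}"
    unfolding shallow_step_def by blast
  from sat obtain I where I: "is_model I N'" unfolding satisfiable_def by blast
  have t1: "true_cls I (add_mset (Atm S [Var x]) \<Gamma>1, {#arepl_at E (i # q) (Var x)#})"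
    and t2: "true_cls I (\<Gamma>2, {#Atm S [s]#})" using I N' by (auto simp: is_model_def)
  have "true_cls I (\<Gamma>, {#E#})"
    unfolding true_cls_def
  proof (intro allI impI)
    fix \<sigma> :: "'v \<Rightarrow> ('f, 'v) trm" assume g: "grounding \<sigma>"
    show "subst_atm \<sigma> ` set_mset (snd (\<Gamma>, {#E#})) \<inter> I \<noteq> {} \<or>
          \<not> subst_atm \<sigma> ` set_mset (fst (\<Gamma>, {#E#})) \<subseteq> I"
    proof (cases "subst_atm \<sigma> ` set_mset \<Gamma> \<subseteq> I")
      case False thus ?thesis by simp
    next
      case True
      have "subst_atm \<sigma> ` set_mset \<Gamma>2 \<subseteq> I" using True G by auto
      hence Ss: "subst_atm \<sigma> (Atm S [s]) \<in> I" using t2 g unfolding true_cls_def by auto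
      define \<sigma>' where "\<sigma>' = \<sigma>(x := subst \<sigma> s)"
      have g': "grounding \<sigma>'" using g ground_subst[OF g, of s]
        by (auto simp: grounding_def \<sigma>'_def)
      have xE: "x \<notin> vars_atm E" using x by (auto simp: vars_cls_def atoms_cls_def)
      have agreeG: "subst_atm \<sigma>' A = subst_atm \<sigma> A" if "A \<in># \<Gamma>" for A
        using x that by (intro subst_atm_agree) (auto simp: vars_cls_def atoms_cls_def \<sigma>'_def)
      have "subst_atm \<sigma>' ` set_mset (add_mset (Atm S [Var x]) \<Gamma>1) \<subseteq> I"
      proof -
        have "subst_atm \<sigma>' (Atm S [Var x]) \<in> I" using Ss by (simp add: \<sigma>'_def)
        moreover have "subst_atm \<sigma>' A \<in> I" if "A \<in># \<Gamma>1" for A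
        proof -
          have "A \<in># \<Gamma>" using that G by auto
          thus ?thesis using agreeG True by auto
        qed
        ultimately show ?thesis by auto
      qed
      hence "subst_atm \<sigma>' (arepl_at E (i # q) (Var x)) \<in> I"
        using t1 g' unfolding true_cls_def by auto
      moreover have "subst_atm \<sigma>' (arepl_at E (i # q) (Var x)) = subst_atm \<sigma> E"
        using xE s by (intro subst_arepl[OF v]) (auto simp: \<sigma>'_def)
      ultimately show ?thesis by auto
    qed
  qed
  hence "is_model I N" using I N' by (auto simp: is_model_def)
  thus "satisfiable N" unfolding satisfiable_def by blast
qed

lemma linear_oa: "over_approximation (linear_step :: ('p, 'f, 'v) cls set \<Rightarrow> _ \<Rightarrow> bool)"
  unfolding over_approximation_def
proof (intro allI impI)
  fix N N' :: "('p, 'f, 'v) cls set" assume st: "linear_step N N'" and sat: "satisfiable N'"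
  then obtain \<Gamma> E p q x x' where
    C: "(\<Gamma>, {#E#}) \<in> N" and v: "valid_apos E q" and s: "asubt_at E q = Var x"
    and x: "x' \<notin> vars_cls (\<Gamma>, {#E#})"
    and N': "N' = (N - {(\<Gamma>, {#E#})}) \<union>
               {(image_mset (subst_atm (Var(x := Var x'))) \<Gamma> + \<Gamma>,
                 {#arepl_at E q (Var x')#})}"
    unfolding linear_step_def by blast
  from sat obtain I where I: "is_model I N'" unfolding satisfiable_def by blast
  have t1: "true_cls I (image_mset (subst_atm (Var(x := Var x'))) \<Gamma> + \<Gamma>,
                 {#arepl_at E q (Var x')#})" using I N' by (auto simp: is_model_def)
  have "true_cls I (\<Gamma>, {#E#})"
    unfolding true_cls_def
  proof (intro allI impI)
    fix \<sigma> :: "'v \<Rightarrow> ('f, 'v) trm" assume g: "grounding \<sigma>"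
    show "subst_atm \<sigma> ` set_mset (snd (\<Gamma>, {#E#})) \<inter> I \<noteq> {} \<or>
          \<not> subst_atm \<sigma> ` set_mset (fst (\<Gamma>, {#E#})) \<subseteq> I"
    proof (cases "subst_atm \<sigma> ` set_mset \<Gamma> \<subseteq> I")
      case False thus ?thesis by simp
    next
      case True
      define \<sigma>' where "\<sigma>' = \<sigma>(x' := \<sigma> x)"
      have g': "grounding \<sigma>'" using g by (auto simp: grounding_def \<sigma>'_def)
      have xE: "x' \<notin> vars_atm E" using x by (auto simp: vars_cls_def atoms_cls_def)
      have agreeG: "subst_atm \<sigma>' A = subst_atm \<sigma> A" if "A \<in># \<Gamma>" for A
        using x that by (intro subst_atm_agree) (auto simp: vars_cls_def atoms_cls_def \<sigma>'_def)
      have agreeG2: "subst_atm \<sigma>' (subst_atm (Var(x := Var x')) A) = subst_atm \<sigma> A"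
        if "A \<in># \<Gamma>" for A
        unfolding subst_atm_comp
        using x that by (intro subst_atm_agree) (auto simp: vars_cls_def atoms_cls_def \<sigma>'_def)
      have "subst_atm \<sigma>' ` set_mset (image_mset (subst_atm (Var(x := Var x'))) \<Gamma> + \<Gamma>) \<subseteq> I"
        using True agreeG agreeG2 by auto
      hence "subst_atm \<sigma>' (arepl_at E q (Var x')) \<in> I"
        using t1 g' unfolding true_cls_def by auto
      moreover have "subst_atm \<sigma>' (arepl_at E q (Var x')) = subst_atm \<sigma> E"
        using xE s by (intro subst_arepl[OF v]) (auto simp: \<sigma>'_def)
      ultimately show ?thesis by auto
    qed
  qed
  hence "is_model I N" using I N' by (auto simp: is_model_def)
  thus "satisfiable N" unfolding satisfiable_def by blast
qed


section \<open>Termination measures\<close>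

fun nodes :: "('f, 'v) trm \<Rightarrow> nat" where
  "nodes (Var x) = 0"
| "nodes (Fn f ts) = Suc (sum_list (map nodes ts))"

fun inner :: "('f, 'v) trm \<Rightarrow> nat" where
  "inner (Var x) = 0"
| "inner (Fn f ts) = sum_list (map nodes ts)"

fun occs :: "('f, 'v) trm \<Rightarrow> 'v multiset" where
  "occs (Var x) = {#x#}"
| "occs (Fn f ts) = sum_list (map occs ts)"

lemma sum_list_upd:
  fixes g :: "'a \<Rightarrow> 'b::comm_monoid_add"
  shows "i < length xs \<Longrightarrow> sum_list (map g (xs[i := v])) + g (xs ! i) = sum_list (map g xs) + g v"
proof (induction xs arbitrary: i)
  case Nil thus ?case by simp
next
  case (Cons a xs) thus ?case by (cases i) (auto simp: algebra_simps)
qed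

lemma nodes_repl: "valid_pos t q \<Longrightarrow> nodes (repl_at t q r) + nodes (subt_at t q) = nodes t + nodes r"
proof (induction q arbitrary: t)
  case Nil thus ?case by simp
next
  case (Cons i q)
  then obtain f ts where t: "t = Fn f ts" and i: "i < length ts" and v: "valid_pos (ts!i) q"
    by (auto split: trm.splits)
  have a: "sum_list (map nodes (ts[i := repl_at (ts!i) q r])) + nodes (ts!i)
     = sum_list (map nodes ts) + nodes (repl_at (ts!i) q r)" using sum_list_upd[OF i] .
  have b: "nodes (repl_at (ts!i) q r) + nodes (subt_at (ts!i) q) = nodes (ts!i) + nodes r"
    using Cons.IH[OF v] .
  show ?case using a b t i by simp
qed

lemma inner_repl: "valid_pos t q \<Longrightarrow> q \<noteq> [] \<Longrightarrow>
   inner (repl_at t q r) + nodes (subt_at t q) = inner t + nodes r"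
proof -
  assume vq: "valid_pos t q" and q: "q \<noteq> []"
  then obtain i q' where qq: "q = i # q'" by (cases q) auto
  then obtain f ts where t: "t = Fn f ts" and i: "i < length ts" and v: "valid_pos (ts!i) q'"
    using vq by (auto split: trm.splits)
  have a: "sum_list (map nodes (ts[i := repl_at (ts!i) q' r])) + nodes (ts!i)
     = sum_list (map nodes ts) + nodes (repl_at (ts!i) q' r)" using sum_list_upd[OF i] .
  have b: "nodes (repl_at (ts!i) q' r) + nodes (subt_at (ts!i) q') = nodes (ts!i) + nodes r"
    using nodes_repl[OF v] .
  show ?thesis using a b t i qq by simp
qed

lemma occs_repl: "valid_pos t q \<Longrightarrow> subt_at t q = Var x \<Longrightarrow>
   occs (repl_at t q (Var x')) + {#x#} = occs t + {#x'#}"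
proof (induction q arbitrary: t)
  case Nil thus ?case by simp
next
  case (Cons i q)
  then obtain f ts where t: "t = Fn f ts" and i: "i < length ts" and v: "valid_pos (ts!i) q"
    by (auto split: trm.splits)
  have a: "sum_list (map occs (ts[i := repl_at (ts!i) q (Var x')])) + occs (ts!i)
     = sum_list (map occs ts) + occs (repl_at (ts!i) q (Var x'))" using sum_list_upd[OF i] .
  have b: "occs (repl_at (ts!i) q (Var x')) + {#x#} = occs (ts!i) + {#x'#}"
    using Cons.IH[OF v] Cons.prems t by simp
  have "occs (repl_at t (i # q) (Var x')) + occs (ts!i) + {#x#}
      = occs t + {#x'#} + occs (ts!i)"
    using a b t by (simp add: algebra_simps)
  thus ?case by (simp add: algebra_simps)
qed

lemma set_occs: "set_mset (occs t) = vars_trm t"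
  by (induction t) auto

lemma count_sum_list: "count (sum_list (map g xs)) x = sum_list (map (\<lambda>t. count (g t) x) xs)"
  by (induction xs) auto

lemma two_le_sum_list:
  fixes xs :: "nat list"
  assumes "i < length xs" "j < length xs" "i \<noteq> j"
  shows "xs ! i + xs ! j \<le> sum_list xs"
proof -
  have a: "sum_list (map id (xs[i := 0])) + id (xs ! i) = sum_list (map id xs) + id 0"
    using sum_list_upd[OF assms(1)] .
  have "(xs[i := 0]) ! j \<le> sum_list (xs[i := 0])"
    using assms by (intro elem_le_sum_list) auto
  thus ?thesis using a assms by simp
qed

lemma var_in_occs: "valid_pos t p \<Longrightarrow> subt_at t p = Var x \<Longrightarrow> x \<in># occs t"
  using vars_subt[of t p] by (auto simp: set_occs)

lemma two_pos:
  "valid_pos t p \<Longrightarrow> valid_pos t q \<Longrightarrow> p \<noteq> q \<Longrightarrow> subt_at t p = Var x \<Longrightarrow>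
   subt_at t q = Var x \<Longrightarrow> 2 \<le> count (occs t) x"
proof (induction t arbitrary: p q)
  case (Var y)
  thus ?case by (cases p; cases q) auto
next
  case (Fn f ts)
  obtain i p' where p: "p = i # p'" using Fn.prems by (cases p) auto
  obtain j q' where q: "q = j # q'" using Fn.prems by (cases q) auto
  have i: "i < length ts" "valid_pos (ts!i) p'" "subt_at (ts!i) p' = Var x"
    using Fn.prems p by auto
  have j: "j < length ts" "valid_pos (ts!j) q'" "subt_at (ts!j) q' = Var x"
    using Fn.prems q by auto
  have cnt: "count (occs (Fn f ts)) x = sum_list (map (\<lambda>t. count (occs t) x) ts)"
    by (simp add: count_sum_list)
  show ?case
  proof (cases "i = j")
    case True
    hence "p' \<noteq> q'" using Fn.prems p q by auto
    hence "2 \<le> count (occs (ts!i)) x"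
      using Fn.IH[of "ts!i" p' q'] i j True by auto
    moreover have "count (occs (ts!i)) x \<le> sum_list (map (\<lambda>t. count (occs t) x) ts)"
      using elem_le_sum_list[of i "map (\<lambda>t. count (occs t) x) ts"] i by simp
    ultimately show ?thesis using cnt by simp
  next
    case False
    have "count (occs (ts!i)) x + count (occs (ts!j)) x \<le> sum_list (map (\<lambda>t. count (occs t) x) ts)"
      using two_le_sum_list[of i "map (\<lambda>t. count (occs t) x) ts" j] i j False by simp
    moreover have "0 < count (occs (ts!i)) x" "0 < count (occs (ts!j)) x"
      using var_in_occs[OF i(2,3)] var_in_occs[OF j(2,3)] by simp_all
    ultimately show ?thesis using cnt by (simp del: count_greater_zero_iff)
  qed
qed

lemma card_set_mset_le_size: "card (set_mset M) \<le> size M"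
  by (induction M) (auto simp: card_insert_if)

definition occa :: "('p, 'f, 'v) atm \<Rightarrow> 'v multiset" where
  "occa E = sum_list (map occs (atm_args E))"

definition wa :: "('p, 'f, 'v) atm \<Rightarrow> nat" where
  "wa E = sum_list (map inner (atm_args E))"

definition la :: "('p, 'f, 'v) atm \<Rightarrow> nat" where
  "la E = size (occa E) - card (set_mset (occa E))"

lemma occa_eq: "occa (Atm P ts) = occs (Fn f ts)" by (simp add: occa_def)

lemma set_occa: "set_mset (occa E) = vars_atm E"
  by (cases E) (auto simp: occa_def vars_atm_def set_occs)

lemma arepl_fn: "arepl_at (Atm P ts) (i # q) r = Atm P (case repl_at (Fn f ts) (i # q) r of Fn g us \<Rightarrow> us)"
  by simp

lemma wa_shallow:
  assumes v: "valid_apos E (i # q)" and q: "q \<noteq> []" and s: "asubt_at E (i # q) = Fn f ts'"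
  shows "wa (arepl_at E (i # q) (Var x)) + wa (Atm S [Fn f ts']) + 1 = wa E"
proof -
  obtain P ts where E: "E = Atm P ts" by (cases E)
  have i: "i < length ts" and vv: "valid_pos (ts!i) q" using v E by auto
  have a: "sum_list (map inner (ts[i := repl_at (ts!i) q (Var x)])) + inner (ts!i)
     = sum_list (map inner ts) + inner (repl_at (ts!i) q (Var x))" using sum_list_upd[OF i] .
  have b: "inner (repl_at (ts!i) q (Var x)) + nodes (Fn f ts') = inner (ts!i) + 0"
    using inner_repl[OF vv q, of "Var x"] s E by simp
  show ?thesis using a b E by (simp add: wa_def)
qed

lemma wa_linear:
  assumes v: "valid_apos E q" and s: "asubt_at E q = Var x"
  shows "wa (arepl_at E q (Var x')) = wa E"
proof -
  obtain P ts where E: "E = Atm P ts" by (cases E)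
  obtain i q' where qq: "q = i # q'" using v by (cases q) auto
  have i: "i < length ts" and vv: "valid_pos (ts!i) q'" using v E qq by auto
  have a: "sum_list (map inner (ts[i := repl_at (ts!i) q' (Var x')])) + inner (ts!i)
     = sum_list (map inner ts) + inner (repl_at (ts!i) q' (Var x'))" using sum_list_upd[OF i] .
  have b: "inner (repl_at (ts!i) q' (Var x')) = inner (ts!i)"
  proof (cases "q' = []")
    case True thus ?thesis using s E qq by simp
  next
    case False
    show ?thesis using inner_repl[OF vv False, of "Var x'"] s E qq by simp
  qed
  show ?thesis using a b E qq by (simp add: wa_def)
qed

lemma la_linear:
  assumes vp: "valid_apos E p" and vq: "valid_apos E q" and pq: "p \<noteq> q"
    and sp: "asubt_at E p = Var x" and sq: "asubt_at E q = Var x" and x': "x' \<notin> vars_atm E"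
  shows "la (arepl_at E q (Var x')) < la E"
proof -
  obtain P ts where E: "E = Atm P ts" by (cases E)
  obtain i q' where qq: "q = i # q'" using vq by (cases q) auto
  obtain j p' where pp: "p = j # p'" using vp by (cases p) auto
  have i: "i < length ts" and vv: "valid_pos (ts!i) q'" using vq E qq by auto
  define f0 :: 'b where "f0 = undefined"
  have M: "occa E = occs (Fn f0 ts)" using E by (simp add: occa_def)
  have c2: "2 \<le> count (occa E) x"
    unfolding M using two_pos[of "Fn f0 ts" p q x] vp vq pq sp sq E pp qq by auto
  let ?M = "occa E" and ?M1 = "occa (arepl_at E q (Var x'))"
  have a: "sum_list (map occs (ts[i := repl_at (ts!i) q' (Var x')])) + occs (ts!i)
     = sum_list (map occs ts) + occs (repl_at (ts!i) q' (Var x'))" using sum_list_upd[OF i] .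
  have b: "occs (repl_at (ts!i) q' (Var x')) + {#x#} = occs (ts!i) + {#x'#}"
    using occs_repl[OF vv] sq E qq by simp
  have eq: "?M1 + {#x#} = ?M + {#x'#}"
  proof -
    have "?M1 + occs (ts!i) + {#x#} = ?M + {#x'#} + occs (ts!i)"
      using a b E qq by (simp add: occa_def algebra_simps)
    thus ?thesis by (simp add: algebra_simps)
  qed
  have x'M: "x' \<notin># ?M" using x' set_occa[of E] by auto
  have sz: "size ?M1 = size ?M" using arg_cong[OF eq, of size] by simp
  have cnt: "count ?M1 y + (if y = x then 1 else 0) = count ?M y + (if y = x' then 1 else 0)" for y
    using arg_cong[OF eq, of "\<lambda>M. count M y"] by (cases "y = x"; cases "y = x'") auto
  have xx: "x \<noteq> x'" using x'M c2 by (metis count_eq_zero_iff not_numeral_le_zero)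
  have set1: "set_mset ?M1 = insert x' (set_mset ?M)"
  proof (rule set_eqI)
    fix y
    have "count ?M1 y > 0 \<longleftrightarrow> (y = x' \<or> count ?M y > 0)"
      using cnt[of y] c2 xx by (cases "y = x"; cases "y = x'") (auto simp del: count_greater_zero_iff)
    thus "y \<in># ?M1 \<longleftrightarrow> y \<in> insert x' (set_mset ?M)" by simp
  qed
  have cd: "card (set_mset ?M1) = Suc (card (set_mset ?M))" using set1 x'M by simp
  have "card (set_mset ?M1) \<le> size ?M1" by (rule card_set_mset_le_size)
  thus ?thesis using sz cd by (simp add: la_def)
qed

definition NM :: "('p, 'f, 'v) cls set \<Rightarrow> 'p set" where
  "NM N = {Q. \<exists>C\<in>N. \<exists>ts. Atm Q ts \<in> atoms_cls C \<and> length ts > 1}"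

definition HH :: "('p, 'f, 'v) cls set \<Rightarrow> nat" where
  "HH N = card {C\<in>N. size (snd C) > 1}"

definition wc :: "('p, 'f, 'v) cls \<Rightarrow> nat" where
  "wc C = sum_mset (image_mset wa (snd C))"

definition lc :: "('p, 'f, 'v) cls \<Rightarrow> nat" where
  "lc C = sum_mset (image_mset la (snd C))"

definition mu :: "('p, 'f, 'v) cls set \<Rightarrow> nat \<times> nat \<times> nat \<times> nat" where
  "mu N = (card (NM N), HH N, sum wc N, sum lc N)"

definition R :: "(('p, 'f, 'v) cls set \<times> ('p, 'f, 'v) cls set) set" where
  "R = inv_image (less_than <*lex*> less_than <*lex*> less_than <*lex*> less_than) mu"

lemma wf_R: "wf R"
  unfolding R_def by auto

lemma finite_NM: "finite N \<Longrightarrow> finite (NM N)"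
proof -
  assume f: "finite N"
  have "NM N \<subseteq> (\<Union>C\<in>N. atm_pred ` atoms_cls C)"
    by (force simp: NM_def)
  moreover have "finite (\<Union>C\<in>N. atm_pred ` atoms_cls C)"
    using f by (auto simp: atoms_cls_def)
  ultimately show ?thesis by (rule finite_subset)
qed

lemma arepl_pred: "atm_pred (arepl_at E p r) = atm_pred E"
  by (cases E; cases p) auto

lemma arepl_len: "length (atm_args (arepl_at E p r)) = length (atm_args E)"
  by (cases E; cases p) auto

lemma NM_mem: "Atm Q ts \<in> atoms_cls C \<Longrightarrow> C \<in> N \<Longrightarrow> length ts > 1 \<Longrightarrow> Q \<in> NM N"
  by (auto simp: NM_def)

lemma arepl_NM:
  assumes "arepl_at E p r = Atm Q ts" "length ts > 1" "(\<Gamma>, {#E#}) \<in> N"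
  shows "Q \<in> NM N"
proof -
  obtain P us where E: "E = Atm P us" by (cases E)
  have "Q = P" "length ts = length us" using arepl_pred[of E p r] arepl_len[of E p r] assms(1) E by auto
  thus ?thesis using assms E by (intro NM_mem[of _ us "(\<Gamma>, {#E#})"]) (auto simp: atoms_cls_def)
qed

lemma sum_insert_le: "finite A \<Longrightarrow> sum (g :: _ \<Rightarrow> nat) (insert a A) \<le> g a + sum g A"
  by (simp add: sum.insert_if)

lemma sum_remove_nat: "finite A \<Longrightarrow> a \<in> A \<Longrightarrow> sum (g :: _ \<Rightarrow> nat) A = g a + sum g (A - {a})"
  by (simp add: sum.remove)

lemma HH_le:
  assumes "finite N" "C0 \<in> N" "\<forall>C\<in>N'. C \<in> N - {C0} \<or> size (snd C) \<le> 1"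
  shows "HH N' \<le> HH N"
proof -
  have "{C\<in>N'. size (snd C) > 1} \<subseteq> {C\<in>N. size (snd C) > 1}" using assms by auto
  thus ?thesis unfolding HH_def by (rule card_mono[rotated]) (use assms in auto)
qed

lemma lex1: "(a' :: nat) < a \<Longrightarrow>
  ((a', b', c', d'), (a, b, c, d)) \<in> less_than <*lex*> less_than <*lex*> less_than <*lex*> less_than"
  by simp

lemma lex2: "(a' :: nat) \<le> a \<Longrightarrow> (b' :: nat) < b \<Longrightarrow>
  ((a', b', c', d'), (a, b, c, d)) \<in> less_than <*lex*> less_than <*lex*> less_than <*lex*> less_than"
  by auto

lemma lex3: "(a' :: nat) \<le> a \<Longrightarrow> (b' :: nat) \<le> b \<Longrightarrow> (c' :: nat) < c \<Longrightarrow>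
  ((a', b', c', d'), (a, b, c, d)) \<in> less_than <*lex*> less_than <*lex*> less_than <*lex*> less_than"
  by auto

lemma lex_less: "(a' :: nat) \<le> a \<Longrightarrow> (b' :: nat) \<le> b \<Longrightarrow> (c' :: nat) \<le> c \<Longrightarrow> (d' :: nat) < d \<Longrightarrow>
  ((a', b', c', d'), (a, b, c, d)) \<in> less_than <*lex*> less_than <*lex*> less_than <*lex*> less_than"
  by auto

lemma monadic_R:
  assumes f: "finite N" and st: "monadic_step T fP N N'"
  shows "finite N' \<and> (N', N) \<in> R"
proof -
  obtain P where P: "\<exists>C\<in>N. \<exists>ts. Atm P ts \<in> atoms_cls C \<and> length ts > 1"
    and N': "N' = mu_cls T fP P ` N" using st unfolding monadic_step_def by blast
  have sub: "NM N' \<subseteq> NM N - {P}"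
  proof
    fix Q assume "Q \<in> NM N'"
    then obtain C ts where C: "C \<in> N" and A: "Atm Q ts \<in> atoms_cls (mu_cls T fP P C)" and l: "length ts > 1"
      unfolding NM_def N' by auto
    have "atoms_cls (mu_cls T fP P C) = mu_atm T fP P ` atoms_cls C"
      by (auto simp: atoms_cls_def mu_cls_def)
    then obtain B where B: "B \<in> atoms_cls C" "mu_atm T fP P B = Atm Q ts" using A by auto
    obtain R us where Bd: "B = Atm R us" by (cases B)
    show "Q \<in> NM N - {P}"
    proof (cases "R = P \<and> length us > 1")
      case True thus ?thesis using B Bd l by auto
    next
      case False
      hence "mu_atm T fP P B = Atm R us" using Bd by (simp only: mu_atm.simps if_not_P if_False)
      hence "Atm R us = Atm Q ts" using B by simp
      thus ?thesis using False C B Bd l unfolding NM_def by auto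
    qed
  qed
  have "P \<in> NM N" using P by (auto simp: NM_def)
  hence "NM N' \<subset> NM N" using sub by auto
  hence "card (NM N') < card (NM N)" using finite_NM[OF f] by (rule psubset_card_mono[rotated])
  hence "(N', N) \<in> R" unfolding R_def mu_def in_inv_image by (rule lex1)
  thus ?thesis using f N' by simp
qed

lemma horn_R:
  assumes f: "finite N" and st: "horn_step N N'"
  shows "finite N' \<and> (N', N) \<in> R"
proof -
  obtain \<Gamma> \<Delta> E where C: "(\<Gamma>, \<Delta>) \<in> N" and sz: "size \<Delta> > 1" and E: "E \<in># \<Delta>"
    and N': "N' = (N - {(\<Gamma>, \<Delta>)}) \<union> {(\<Gamma>, {#E#})}" using st unfolding horn_step_def by blast
  have "NM N' \<subseteq> NM N"
  proof
    fix Q assume "Q \<in> NM N'"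
    then obtain C' ts where CN: "C' \<in> N'" and A: "Atm Q ts \<in> atoms_cls C'" and l: "length ts > 1"
      unfolding NM_def by auto
    show "Q \<in> NM N"
    proof (cases "C' \<in> N")
      case True show ?thesis by (rule NM_mem[OF A True l])
    next
      case False
      hence "C' = (\<Gamma>, {#E#})" using CN N' by auto
      hence "Atm Q ts \<in> atoms_cls (\<Gamma>, \<Delta>)" using A E by (auto simp: atoms_cls_def)
      thus ?thesis using NM_mem[OF _ C l] by blast
    qed
  qed
  hence a: "card (NM N') \<le> card (NM N)" using finite_NM[OF f] by (rule card_mono[rotated])
  have "{C\<in>N'. size (snd C) > 1} \<subseteq> {C\<in>N. size (snd C) > 1} - {(\<Gamma>, \<Delta>)}" using N' by auto
  hence "card {C\<in>N'. size (snd C) > 1} \<le> card ({C\<in>N. size (snd C) > 1} - {(\<Gamma>, \<Delta>)})"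
    using f by (intro card_mono) auto
  also have "\<dots> < card {C\<in>N. size (snd C) > 1}"
    using f C sz by (intro card_Diff1_less) auto
  finally have hh: "HH N' < HH N" unfolding HH_def .
  have "(N', N) \<in> R" unfolding R_def mu_def in_inv_image using a hh by (rule lex2)
  thus ?thesis using f N' by simp
qed

lemma shallow_R:
  assumes f: "finite N" and st: "shallow_step N N'"
  shows "finite N' \<and> (N', N) \<in> R"
proof -
  obtain \<Gamma> E i q s x S \<Gamma>1 \<Gamma>2 where
    C: "(\<Gamma>, {#E#}) \<in> N" and v: "valid_apos E (i # q)" and q: "q \<noteq> []"
    and s: "asubt_at E (i # q) = s" and sf: "\<exists>f ts. s = Fn f ts"
    and G: "\<Gamma>1 \<union># \<Gamma>2 = \<Gamma>"
    and N': "N' = (N - {(\<Gamma>, {#E#})}) \<union>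
               {(add_mset (Atm S [Var x]) \<Gamma>1, {#arepl_at E (i # q) (Var x)#}),
                (\<Gamma>2, {#Atm S [s]#})}"
    using st unfolding shallow_step_def by blast
  obtain f ts' where sF: "s = Fn f ts'" using sf by blast
  let ?C1 = "(add_mset (Atm S [Var x]) \<Gamma>1, {#arepl_at E (i # q) (Var x)#})"
  let ?C2 = "(\<Gamma>2, {#Atm S [s]#})"
  have fin: "finite N'" using f N' by simp
  have "NM N' \<subseteq> NM N"
  proof
    fix Q assume "Q \<in> NM N'"
    then obtain C ts where CN: "C \<in> N'" and A: "Atm Q ts \<in> atoms_cls C" and l: "length ts > 1"
      unfolding NM_def by auto
    consider "C \<in> N" | "C = ?C1" | "C = ?C2" using CN N' by auto
    thus "Q \<in> NM N"
    proof cases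
      case 1 show ?thesis by (rule NM_mem[OF A 1 l])
    next
      case 2
      hence "Atm Q ts \<in># \<Gamma>1 \<or> arepl_at E (i # q) (Var x) = Atm Q ts"
        using A l by (auto simp: atoms_cls_def)
      thus ?thesis
      proof
        assume "Atm Q ts \<in># \<Gamma>1"
        hence "Atm Q ts \<in> atoms_cls (\<Gamma>, {#E#})" using G by (auto simp: atoms_cls_def)
        thus ?thesis using C l by (rule NM_mem)
      next
        assume "arepl_at E (i # q) (Var x) = Atm Q ts"
        thus ?thesis using l C by (rule arepl_NM)
      qed
    next
      case 3
      hence "Atm Q ts \<in># \<Gamma>2" using A l by (auto simp: atoms_cls_def)
      hence "Atm Q ts \<in> atoms_cls (\<Gamma>, {#E#})" using G by (auto simp: atoms_cls_def)
      thus ?thesis using C l by (rule NM_mem)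
    qed
  qed
  hence a: "card (NM N') \<le> card (NM N)" using finite_NM[OF f] by (rule card_mono[rotated])
  have b: "HH N' \<le> HH N" using f C N' by (intro HH_le) auto
  have w: "wc ?C1 + wc ?C2 + 1 = wc (\<Gamma>, {#E#})"
    using wa_shallow[OF v q, of f ts' x S] s sF by (simp add: wc_def)
  have "sum wc N' \<le> wc ?C1 + (wc ?C2 + sum wc (N - {(\<Gamma>, {#E#})}))"
  proof -
    have e: "N' = insert ?C1 (insert ?C2 (N - {(\<Gamma>, {#E#})}))" using N' by auto
    have f1: "finite (insert ?C2 (N - {(\<Gamma>, {#E#})}))" using f by simp
    have "sum wc N' \<le> wc ?C1 + sum wc (insert ?C2 (N - {(\<Gamma>, {#E#})}))"
      unfolding e by (rule sum_insert_le[OF f1])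
    also have "\<dots> \<le> wc ?C1 + (wc ?C2 + sum wc (N - {(\<Gamma>, {#E#})}))"
      using sum_insert_le[of "N - {(\<Gamma>, {#E#})}" wc ?C2] f by simp
    finally show ?thesis .
  qed
  also have "\<dots> < sum wc N" using sum_remove_nat[OF f C, of wc] w by simp
  finally have c: "sum wc N' < sum wc N" .
  have "(N', N) \<in> R" unfolding R_def mu_def in_inv_image using a b c by (rule lex3)
  thus ?thesis using fin by simp
qed

lemma linear_R:
  assumes f: "finite N" and st: "linear_step N N'"
  shows "finite N' \<and> (N', N) \<in> R"
proof -
  obtain \<Gamma> E p q x x' where
    C: "(\<Gamma>, {#E#}) \<in> N" and pq: "p \<noteq> q" and vp: "valid_apos E p" and vq: "valid_apos E q"
    and sp: "asubt_at E p = Var x" and sq: "asubt_at E q = Var x"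
    and x': "x' \<notin> vars_cls (\<Gamma>, {#E#})"
    and N': "N' = (N - {(\<Gamma>, {#E#})}) \<union>
               {(image_mset (subst_atm (Var(x := Var x'))) \<Gamma> + \<Gamma>,
                 {#arepl_at E q (Var x')#})}"
    using st unfolding linear_step_def by blast
  let ?C1 = "(image_mset (subst_atm (Var(x := Var x'))) \<Gamma> + \<Gamma>, {#arepl_at E q (Var x')#})"
  have fin: "finite N'" using f N' by simp
  have "NM N' \<subseteq> NM N"
  proof
    fix Q assume "Q \<in> NM N'"
    then obtain C ts where CN: "C \<in> N'" and A: "Atm Q ts \<in> atoms_cls C" and l: "length ts > 1"
      unfolding NM_def by auto
    consider "C \<in> N" | "C = ?C1" using CN N' by auto
    thus "Q \<in> NM N"
    proof cases
      case 1 show ?thesis by (rule NM_mem[OF A 1 l])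
    next
      case 2
      hence "Atm Q ts \<in># \<Gamma> \<or> (\<exists>B\<in>#\<Gamma>. subst_atm (Var(x := Var x')) B = Atm Q ts)
           \<or> arepl_at E q (Var x') = Atm Q ts"
        using A by (auto simp: atoms_cls_def)
      thus ?thesis
      proof (elim disjE)
        assume "Atm Q ts \<in># \<Gamma>"
        hence "Atm Q ts \<in> atoms_cls (\<Gamma>, {#E#})" by (auto simp: atoms_cls_def)
        thus ?thesis using C l by (rule NM_mem)
      next
        assume "\<exists>B\<in>#\<Gamma>. subst_atm (Var(x := Var x')) B = Atm Q ts"
        then obtain Q' us where "Atm Q' us \<in># \<Gamma>" "subst_atm (Var(x := Var x')) (Atm Q' us) = Atm Q ts"
          by (metis atm_pred.cases)
        hence "Atm Q us \<in> atoms_cls (\<Gamma>, {#E#})" "length us = length ts"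
          by (auto simp: atoms_cls_def)
        thus ?thesis using C l by (intro NM_mem[of Q us]) auto
      next
        assume "arepl_at E q (Var x') = Atm Q ts"
        thus ?thesis using l C by (rule arepl_NM)
      qed
    qed
  qed
  hence a: "card (NM N') \<le> card (NM N)" using finite_NM[OF f] by (rule card_mono[rotated])
  have b: "HH N' \<le> HH N" using f C N' by (intro HH_le) auto
  have w: "wc ?C1 = wc (\<Gamma>, {#E#})"
    using wa_linear[OF vq sq] by (simp add: wc_def)
  have "sum wc N' \<le> wc ?C1 + sum wc (N - {(\<Gamma>, {#E#})})"
    unfolding N' using f sum_insert_le[of "N - {(\<Gamma>, {#E#})}"] by (simp only: Un_insert_right Un_empty_right finite_Diff)
  also have "\<dots> = sum wc N" using sum_remove_nat[OF f C, of wc] w by simp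
  finally have c: "sum wc N' \<le> sum wc N" .
  have xE: "x' \<notin> vars_atm E" using x' by (auto simp: vars_cls_def atoms_cls_def)
  have l: "lc ?C1 < lc (\<Gamma>, {#E#})"
    using la_linear[OF vp vq pq sp sq xE] by (simp add: lc_def)
  have "sum lc N' \<le> lc ?C1 + sum lc (N - {(\<Gamma>, {#E#})})"
    unfolding N' using f sum_insert_le[of "N - {(\<Gamma>, {#E#})}"] by (simp only: Un_insert_right Un_empty_right finite_Diff)
  also have "\<dots> < sum lc N" using sum_remove_nat[OF f C, of lc] l by simp
  finally have d: "sum lc N' < sum lc N" .
  have "(N', N) \<in> R" unfolding R_def mu_def in_inv_image using a b c d by (rule lex_less)
  thus ?thesis using fin by simp
qed

lemma apr_R: "finite N \<Longrightarrow> apr_step T fP N N' \<Longrightarrow> finite N' \<and> (N', N) \<in> R"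
proof -
  assume f: "finite N" and a: "apr_step T fP N N'"
  hence "monadic_step T fP N N' \<or> horn_step N N' \<or> shallow_step N N' \<or> linear_step N N'"
    unfolding apr_step_def by blast
  thus ?thesis
  proof (elim disjE)
    assume "monadic_step T fP N N'" thus ?thesis by (rule monadic_R[OF f])
  next
    assume "horn_step N N'" thus ?thesis by (rule horn_R[OF f])
  next
    assume "shallow_step N N'" thus ?thesis by (rule shallow_R[OF f])
  next
    assume "linear_step N N'" thus ?thesis by (rule linear_R[OF f])
  qed
qed

lemma apr_termination:
  assumes "finite N0"
  shows "\<not> (\<exists>Ns. Ns 0 = N0 \<and> (\<forall>i. apr_step T fP (Ns i) (Ns (Suc i))))"
proof
  assume "\<exists>Ns. Ns 0 = N0 \<and> (\<forall>i. apr_step T fP (Ns i) (Ns (Suc i)))"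
  then obtain Ns where N0: "Ns 0 = N0" and st: "\<forall>i. apr_step T fP (Ns i) (Ns (Suc i))" by blast
  have fin: "finite (Ns i)" for i
  proof (induction i)
    case 0 thus ?case using N0 assms by simp
  next
    case (Suc i) thus ?case using apr_R[OF Suc st[rule_format, of i]] by blast
  qed
  have ch: "\<forall>i. (Ns (Suc i), Ns i) \<in> R"
  proof
    fix i show "(Ns (Suc i), Ns i) \<in> R" using apr_R[OF fin[of i] st[rule_format, of i]] by (rule conjunct2)
  qed
  show False using wf_R[unfolded wf_iff_no_infinite_down_chain] ch by blast
qed

theorem lemma1:
  fixes T :: 'p and fP :: "'p \<Rightarrow> 'f"
  assumes "inj fP"
  shows "(\<forall>N0 :: ('p, 'f, 'v) cls set.
            finite N0 \<and> T \<notin> preds_set N0 \<and> (\<forall>P. fP P \<notin> funs_set N0) \<longrightarrow>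
            \<not> (\<exists>Ns. Ns 0 = N0 \<and> (\<forall>i. apr_step T fP (Ns i) (Ns (Suc i)))))
       \<and> over_approximation (monadic_step T fP :: ('p, 'f, 'v) cls set \<Rightarrow> _ \<Rightarrow> bool)
       \<and> over_approximation (horn_step :: ('p, 'f, 'v) cls set \<Rightarrow> _ \<Rightarrow> bool)
       \<and> over_approximation (shallow_step :: ('p, 'f, 'v) cls set \<Rightarrow> _ \<Rightarrow> bool)
       \<and> over_approximation (linear_step :: ('p, 'f, 'v) cls set \<Rightarrow> _ \<Rightarrow> bool)"
proof (intro conjI)
  show "\<forall>N0 :: ('p, 'f, 'v) cls set.
            finite N0 \<and> T \<notin> preds_set N0 \<and> (\<forall>P. fP P \<notin> funs_set N0) \<longrightarrow>
            \<not> (\<exists>Ns. Ns 0 = N0 \<and> (\<forall>i. apr_step T fP (Ns i) (Ns (Suc i))))"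
  proof (intro allI impI)
    fix N0 :: "('p, 'f, 'v) cls set"
    assume h: "finite N0 \<and> T \<notin> preds_set N0 \<and> (\<forall>P. fP P \<notin> funs_set N0)"
    show "\<not> (\<exists>Ns. Ns 0 = N0 \<and> (\<forall>i. apr_step T fP (Ns i) (Ns (Suc i))))"
      using h by (intro apr_termination) (rule conjunct1)
  qed
qed (rule monadic_oa horn_oa shallow_oa linear_oa)+

end
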